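(* Let $k$ be a positive integer, let $G$ be a multigraph and let $A\subseteq V(G)$ be nonempty. Then there is a set $X\subseteq E(G)$ with $|X|\le (|A|-1)(k-1)$ that $k$-perfectly separates $A$.
   Context: For vertices $u,v$ of a multigraph $H$, $u\sim_k v$ in $H$ means that either $u=v$ or there are $k$ pairwise edge-disjoint $u$--$v$-paths in $H$. $G-X$ denotes $G$ with the edges of $X$ deleted. An edge set $X$ $k$-perfectly separates $A$ if for all $a,a'\in A$ such that $a\not\sim_k a'$ in $G-X$, the vertices $a$ and $a'$ lie in different components of $G-X$. *)

theory Defs
  imports Main
begin

text \<open>A (finite) multigraph is given by a vertex set V, an edge set E and an
endpoint map ends; parallel edges and loops are allowed. The pair ends e is
read as the unordered pair of endpoints of e.\<close>

definition is_multigraph :: "'v set \<Rightarrow> 'e set \<Rightarrow> ('e \<Rightarrow> 'v \<times> 'v) \<Rightarrow> bool" where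
  "is_multigraph V E ends \<longleftrightarrow> finite V \<and> finite E \<and>
     (\<forall>e\<in>E. fst (ends e) \<in> V \<and> snd (ends e) \<in> V)"

definition is_path :: "'v set \<Rightarrow> 'e set \<Rightarrow> ('e \<Rightarrow> 'v \<times> 'v) \<Rightarrow> 'v \<Rightarrow> 'v \<Rightarrow> 'v list \<Rightarrow> 'e list \<Rightarrow> bool" where
  "is_path V F ends u v vs es \<longleftrightarrow>
     length vs = Suc (length es) \<and> hd vs = u \<and> last vs = v \<and> distinct vs \<and> set vs \<subseteq> V \<and>
     (\<forall>i<length es. es ! i \<in> F \<and>
        (ends (es ! i) = (vs ! i, vs ! Suc i) \<or> ends (es ! i) = (vs ! Suc i, vs ! i)))"

definition k_equiv :: "nat \<Rightarrow> 'v set \<Rightarrow> 'e set \<Rightarrow> ('e \<Rightarrow> 'v \<times> 'v) \<Rightarrow> 'v \<Rightarrow> 'v \<Rightarrow> bool" where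
  "k_equiv k V F ends u v \<longleftrightarrow> u = v \<or>
     (\<exists>P :: nat \<Rightarrow> 'v list \<times> 'e list.
        (\<forall>i<k. is_path V F ends u v (fst (P i)) (snd (P i))) \<and>
        (\<forall>i<k. \<forall>j<k. i \<noteq> j \<longrightarrow> set (snd (P i)) \<inter> set (snd (P j)) = {}))"

definition same_component :: "'v set \<Rightarrow> 'e set \<Rightarrow> ('e \<Rightarrow> 'v \<times> 'v) \<Rightarrow> 'v \<Rightarrow> 'v \<Rightarrow> bool" where
  "same_component V F ends u v \<longleftrightarrow> (\<exists>vs es. is_path V F ends u v vs es)"

definition k_perfectly_separates :: "nat \<Rightarrow> 'v set \<Rightarrow> 'e set \<Rightarrow> ('e \<Rightarrow> 'v \<times> 'v) \<Rightarrow> 'e set \<Rightarrow> 'v set \<Rightarrow> bool" where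
  "k_perfectly_separates k V E ends X A \<longleftrightarrow>
     (\<forall>a\<in>A. \<forall>a'\<in>A. \<not> k_equiv k V (E - X) ends a a' \<longrightarrow> \<not> same_component V (E - X) ends a a')"

end

theory Submission
  imports Defs
begin

fun walk :: "'e set \<Rightarrow> ('e \<Rightarrow> 'v \<times> 'v) \<Rightarrow> 'v list \<Rightarrow> 'e list \<Rightarrow> bool" where
  "walk F ends [v] [] = True"
| "walk F ends (u # v # vs) (e # es) =
     (e \<in> F \<and> (ends e = (u, v) \<or> ends e = (v, u)) \<and> walk F ends (v # vs) es)"
| "walk F ends _ _ = False"

lemma walk_iff:
  "walk F ends vs es \<longleftrightarrow> length vs = Suc (length es) \<and>
    (\<forall>i<length es. es ! i \<in> F \<and>
        (ends (es ! i) = (vs ! i, vs ! Suc i) \<or> ends (es ! i) = (vs ! Suc i, vs ! i)))"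
proof (induction F ends vs es rule: walk.induct)
  case (2 F ends u v vs e es)
  then show ?case by (auto simp: All_less_Suc2)
next
  case ("3_2" F ends v va vb) then show ?case by auto
qed auto

lemma is_path_iff:
  "is_path V F ends u v vs es \<longleftrightarrow> walk F ends vs es \<and> hd vs = u \<and> last vs = v \<and> distinct vs \<and> set vs \<subseteq> V"
  unfolding is_path_def walk_iff by auto

lemma walk_nonempty: "walk F ends vs es \<Longrightarrow> vs \<noteq> []"
  by (cases vs) (auto simp: walk_iff)

lemma walk_edges: "walk F ends vs es \<Longrightarrow> set es \<subseteq> F"
  by (induction F ends vs es rule: walk.induct) auto

lemma walk_ends_in: "walk F ends vs es \<Longrightarrow> e \<in> set es \<Longrightarrow> fst (ends e) \<in> set vs \<and> snd (ends e) \<in> set vs"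
  by (induction F ends vs es rule: walk.induct) auto

lemma walk_mono: "walk F ends vs es \<Longrightarrow> set es \<subseteq> F' \<Longrightarrow> walk F' ends vs es"
  by (induction F ends vs es rule: walk.induct) auto

lemma walk_ends_cong: "walk F ends vs es \<Longrightarrow> (\<forall>e\<in>set es. ends' e = ends e) \<Longrightarrow> walk F ends' vs es"
  by (induction F ends vs es rule: walk.induct) auto

lemma walk_contract:
  "walk F (\<lambda>e. map_prod f f (ends e)) vs es \<Longrightarrow> set vs \<subseteq> W \<Longrightarrow> (\<forall>a. f a \<in> W \<longrightarrow> f a = a) \<Longrightarrow> walk F ends vs es"
proof (induction F "\<lambda>e. map_prod f f (ends e)" vs es rule: walk.induct)
  case (2 F u v vs e es)
  then show ?case by (cases "ends e") auto
qed auto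

lemma walk_glue:
  "walk F ends xs fs \<Longrightarrow> walk F ends (z # zs) gs \<Longrightarrow> e \<in> F \<Longrightarrow>
   ends e = (last xs, z) \<or> ends e = (z, last xs) \<Longrightarrow> walk F ends (xs @ z # zs) (fs @ e # gs)"
proof (induction F ends xs fs rule: walk.induct)
  case (2 F ends u v vs e es)
  then show ?case by auto
qed auto

lemma walk_stay:
  "walk F ends vs es \<Longrightarrow> hd vs \<in> S \<Longrightarrow> (\<forall>e\<in>set es. (fst (ends e) \<in> S) = (snd (ends e) \<in> S)) \<Longrightarrow>
   set vs \<subseteq> S"
proof (induction F ends vs es rule: walk.induct)
  case (2 F ends u v vs e es)
  then show ?case by (cases "ends e") auto
qed auto

lemma walk_split_last:
  "walk F ends vs es \<Longrightarrow> es \<noteq> [] \<Longrightarrow> \<exists>xs fs e. vs = xs @ [last vs] \<and> es = fs @ [e] \<and> xs \<noteq> [] \<and>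
     walk F ends xs fs \<and> e \<in> F \<and> (ends e = (last xs, last vs) \<or> ends e = (last vs, last xs))"
proof (induction F ends vs es rule: walk.induct)
  case (2 F ends u v vs e es)
  show ?case
  proof (cases es)
    case Nil
    with 2 show ?thesis by (cases vs) auto
  next
    case (Cons a list)
    with 2 obtain xs fs e' where h: "v # vs = xs @ [last (v # vs)]" "es = fs @ [e']" "xs \<noteq> []"
      "walk F ends xs fs" "e' \<in> F" "ends e' = (last xs, last (v#vs)) \<or> ends e' = (last (v#vs), last xs)"
      by auto
    obtain y ys where xs: "xs = y # ys" using h(3) by (cases xs) auto
    have "y = v" using h(1) xs by auto
    then have "walk F ends (u # xs) (e # fs)" using 2(2) h(4) xs by auto
    then show ?thesis using h xs 2(2) apply (rule_tac x="u # xs" in exI, rule_tac x="e#fs" in exI, rule_tac x=e' in exI)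
      by auto
  qed
qed auto

lemma walk_single_edge:
  "walk F ends vs es \<Longrightarrow> distinct vs \<Longrightarrow> a \<in> set es \<Longrightarrow> ends a = (x, y) \<or> ends a = (y, x) \<Longrightarrow>
   x = hd vs \<Longrightarrow> y = last vs \<Longrightarrow> vs = [x, y] \<and> es = [a]"
proof -
  assume w: "walk F ends vs es" and d: "distinct vs" and a: "a \<in> set es"
    and ea: "ends a = (x, y) \<or> ends a = (y, x)" and x: "x = hd vs" and y: "y = last vs"
  obtain u v ws e fs where vs: "vs = u # v # ws" and es: "es = e # fs"
  proof -
    obtain e fs where es: "es = e # fs" using a by (cases es) auto
    have "length vs = Suc (Suc (length fs))" using w es by (simp add: walk_iff)
    then obtain u v ws where "vs = u # v # ws"
      by (metis Suc_length_conv)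
    then show ?thesis using es that by blast
  qed
  have w2: "walk F ends (v # ws) fs" using w vs es by auto
  have ue: "ends e = (u, v) \<or> ends e = (v, u)" using w vs es by auto
  show ?thesis
  proof (cases "e = a")
    case True
    then have "v = y" using ue ea x vs d by auto
    have "ws = []"
    proof (rule ccontr)
      assume "ws \<noteq> []"
      then have "last (v # ws) \<in> set ws" by simp
      moreover have "last (v # ws) = v" using \<open>v = y\<close> y vs by simp
      moreover have "v \<notin> set ws" using d vs by simp
      ultimately show False by simp
    qed
    then show ?thesis using w2 \<open>v = y\<close> x vs es True by (cases fs) auto
  next
    case False
    then have "a \<in> set fs" using a es by auto
    then have "x \<in> set (v # ws)" using walk_ends_in[OF w2] ea by (metis fst_conv snd_conv)
    then show ?thesis using x vs d by auto
  qed
qed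

definition ecut :: "'e set \<Rightarrow> ('e \<Rightarrow> 'v \<times> 'v) \<Rightarrow> 'v set \<Rightarrow> 'e set" where
  "ecut F ends S = {e\<in>F. (fst (ends e) \<in> S) \<noteq> (snd (ends e) \<in> S)}"

definition kpaths :: "nat \<Rightarrow> 'v set \<Rightarrow> 'e set \<Rightarrow> ('e \<Rightarrow> 'v \<times> 'v) \<Rightarrow> 'v \<Rightarrow> 'v \<Rightarrow> (nat \<Rightarrow> 'v list \<times> 'e list) \<Rightarrow> bool" where
  "kpaths k V F ends s t P \<longleftrightarrow> (\<forall>i<k. is_path V F ends s t (fst (P i)) (snd (P i))) \<and>
     (\<forall>i<k. \<forall>j<k. i \<noteq> j \<longrightarrow> set (snd (P i)) \<inter> set (snd (P j)) = {})"

lemma path_es_nonempty: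
  assumes "is_path V F ends s t vs es" "s \<noteq> t" shows "es \<noteq> []"
proof
  assume "es = []"
  then have "length vs = 1" using assms(1) by (simp add: is_path_def)
  then obtain v where "vs = [v]" by (metis One_nat_def length_0_conv length_Suc_conv)
  then show False using assms(1,2) by (auto simp: is_path_def)
qed

lemma contract_left:
  assumes p: "is_path V1 E1 (\<lambda>e. map_prod f f (ends e)) s t vs es" and st: "s \<noteq> t" "s \<in> S" "t \<notin> S"
    and f: "f = (\<lambda>v. if v \<in> S then v else t)" and E1: "E1 \<subseteq> E" and V1: "V1 = f ` V"
  shows "\<exists>xs fs e b. vs = xs @ [t] \<and> es = fs @ [e] \<and> xs \<noteq> [] \<and> walk E ends xs fs \<and> distinct xs \<and> hd xs = s \<and>
     set xs \<subseteq> S \<inter> V \<and> e \<in> E \<and> b \<notin> S \<and> last xs \<in> S \<and> (ends e = (last xs, b) \<or> ends e = (b, last xs))"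
proof -
  have w: "walk E1 (\<lambda>e. map_prod f f (ends e)) vs es" and h: "hd vs = s" "last vs = t" "distinct vs" "set vs \<subseteq> V1"
    using p by (auto simp: is_path_iff)
  have "es \<noteq> []" using path_es_nonempty[OF p st(1)] .
  from walk_split_last[OF w this] obtain xs fs e where
    sp: "vs = xs @ [t]" "es = fs @ [e]" "xs \<noteq> []" "walk E1 (\<lambda>e. map_prod f f (ends e)) xs fs" "e \<in> E1"
       "map_prod f f (ends e) = (last xs, t) \<or> map_prod f f (ends e) = (t, last xs)"
    using h(2) by auto
  have dxs: "distinct xs" "t \<notin> set xs" using h(3) sp(1) by auto
  have xsS: "set xs \<subseteq> S \<inter> V"
  proof
    fix x assume x: "x \<in> set xs"
    then have "x \<in> V1" using h(4) sp(1) by auto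
    then obtain a where a: "a \<in> V" "x = f a" using V1 by auto
    have "x \<noteq> t" using x dxs by auto
    then show "x \<in> S \<inter> V" using a f by (auto split: if_splits)
  qed
  have fW: "\<forall>a. f a \<in> S \<longrightarrow> f a = a" using f st by auto
  have "walk E1 ends xs fs" using walk_contract[OF sp(4) _ fW] xsS by auto
  then have wE: "walk E ends xs fs" using walk_mono[OF _ order_trans[OF walk_edges E1]] by blast
  have lS: "last xs \<in> S" using xsS sp(3) by auto
  obtain p q where pq: "ends e = (p, q)" by (cases "ends e")
  have "f p \<in> S \<Longrightarrow> p \<in> S" "f q \<in> S \<Longrightarrow> q \<in> S" "f p = t \<Longrightarrow> p \<notin> S" "f q = t \<Longrightarrow> q \<notin> S"
    using f st by (auto split: if_splits)
  then have "(p = last xs \<and> q \<notin> S) \<or> (q = last xs \<and> p \<notin> S)"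
    using sp(6) pq lS fW by (metis fst_conv map_prod_simp snd_conv)
  then obtain b where "b \<notin> S" "ends e = (last xs, b) \<or> ends e = (b, last xs)" using pq by auto
  moreover have "hd xs = s" using h(1) sp(1,3) by simp
  ultimately show ?thesis using sp dxs xsS wE lS E1 by blast
qed

lemma contract_right:
  assumes p: "is_path V2 E2 (\<lambda>e. map_prod g g (ends e)) s t vs es" and st: "s \<noteq> t" "s \<in> S" "t \<notin> S"
    and g: "g = (\<lambda>v. if v \<notin> S then v else s)" and E2: "E2 \<subseteq> E" and V2: "V2 = g ` V"
  shows "\<exists>z zs d gs w. vs = s # z # zs \<and> es = d # gs \<and> walk E ends (z # zs) gs \<and> distinct (z # zs) \<and>
     last (z # zs) = t \<and> set (z # zs) \<subseteq> V - S \<and> d \<in> E \<and> w \<in> S \<and> (ends d = (w, z) \<or> ends d = (z, w))"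
proof -
  have w: "walk E2 (\<lambda>e. map_prod g g (ends e)) vs es" and h: "hd vs = s" "last vs = t" "distinct vs" "set vs \<subseteq> V2"
    using p by (auto simp: is_path_iff)
  obtain d gs where es: "es = d # gs" using path_es_nonempty[OF p st(1)] by (cases es) auto
  have "length vs = Suc (Suc (length gs))" using w es by (simp add: walk_iff)
  then obtain u z zs where vs: "vs = u # z # zs" by (metis Suc_length_conv)
  have u: "u = s" using h(1) vs by simp
  have w2: "walk E2 (\<lambda>e. map_prod g g (ends e)) (z # zs) gs" and d: "d \<in> E2"
    "map_prod g g (ends d) = (s, z) \<or> map_prod g g (ends d) = (z, s)" using w vs es u by auto
  have dz: "distinct (z # zs)" "s \<notin> set (z # zs)" using h(3) vs u by auto
  have zS: "set (z # zs) \<subseteq> V - S"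
  proof
    fix x assume x: "x \<in> set (z # zs)"
    then have "x \<in> V2" using h(4) vs by auto
    then obtain a where a: "a \<in> V" "x = g a" using V2 by auto
    have "x \<noteq> s" using x dz by auto
    then show "x \<in> V - S" using a g by (auto split: if_splits)
  qed
  have gW: "\<forall>a. g a \<in> - S \<longrightarrow> g a = a" using g st by auto
  have "walk E2 ends (z # zs) gs" using walk_contract[OF w2 _ gW] zS by auto
  then have wE: "walk E ends (z # zs) gs" using walk_mono[OF _ order_trans[OF walk_edges E2]] by blast
  have zn: "z \<notin> S" using zS by auto
  obtain p q where pq: "ends d = (p, q)" by (cases "ends d")
  have g1: "g p \<notin> S \<Longrightarrow> g p = p" "g q \<notin> S \<Longrightarrow> g q = q" "g p = s \<Longrightarrow> p \<in> S" "g q = s \<Longrightarrow> q \<in> S"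
    using g st by (auto split: if_splits)
  have "(q = z \<and> p \<in> S) \<or> (p = z \<and> q \<in> S)"
  proof (cases "map_prod g g (ends d) = (s, z)")
    case True
    then have "g p = s" "g q = z" using pq by auto
    then show ?thesis using g1 zn by auto
  next
    case False
    then have "g p = z" "g q = s" using pq d(2) by auto
    then show ?thesis using g1 zn by auto
  qed
  then obtain w where "w \<in> S" "ends d = (w, z) \<or> ends d = (z, w)" using pq by auto
  moreover have "last (z # zs) = t" using h(2) vs by simp
  ultimately show ?thesis using vs u es wE dz zS d(1) E2 by blast
qed

lemma case_contract:
  fixes V :: "'v set" and E :: "'e set"
  assumes mg: "is_multigraph V E ends" and st: "s \<in> V" "t \<in> V" "s \<noteq> t"
    and cutk: "\<forall>T. s \<in> T \<longrightarrow> t \<notin> T \<longrightarrow> k \<le> card (ecut E ends T)"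
    and S: "s \<in> S" "t \<notin> S" "card (ecut E ends S) = k"
    and y: "y1 \<in> V - S" "y2 \<in> V - S" "y1 \<noteq> y2" and x: "x1 \<in> V \<inter> S" "x2 \<in> V \<inter> S" "x1 \<noteq> x2"
    and IH: "\<And>(V'::'v set) (E'::'e set) ends'. card V' + card E' < card V + card E \<Longrightarrow> is_multigraph V' E' ends' \<Longrightarrow>
       s \<in> V' \<Longrightarrow> t \<in> V' \<Longrightarrow> (\<forall>T. s \<in> T \<longrightarrow> t \<notin> T \<longrightarrow> k \<le> card (ecut E' ends' T)) \<Longrightarrow>
       \<exists>P. kpaths k V' E' ends' s t P"
  shows "\<exists>P. kpaths k V E ends s t P"
proof -
  define f where "f = (\<lambda>v. if v \<in> S then v else t)"
  define g where "g = (\<lambda>v. if v \<notin> S then v else s)"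
  define E1 where "E1 = {e\<in>E. fst (ends e) \<in> S \<or> snd (ends e) \<in> S}"
  define E2 where "E2 = {e\<in>E. fst (ends e) \<notin> S \<or> snd (ends e) \<notin> S}"
  define ends1 where "ends1 = (\<lambda>e. map_prod f f (ends e))"
  define ends2 where "ends2 = (\<lambda>e. map_prod g g (ends e))"
  have fin: "finite V" "finite E" and endsV: "\<forall>e\<in>E. fst (ends e) \<in> V \<and> snd (ends e) \<in> V"
    using mg by (auto simp: is_multigraph_def)
  have mg1: "is_multigraph (f ` V) E1 ends1" using fin endsV unfolding is_multigraph_def E1_def ends1_def by auto
  have mg2: "is_multigraph (g ` V) E2 ends2" using fin endsV unfolding is_multigraph_def E2_def ends2_def by auto
  have cV1: "card (f ` V) < card V"
  proof -
    have "\<not> inj_on f V" using y unfolding inj_on_def f_def by auto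
    then have "card (f ` V) \<noteq> card V" using eq_card_imp_inj_on fin by blast
    then show ?thesis using card_image_le[OF fin(1), of f] by linarith
  qed
  have cV2: "card (g ` V) < card V"
  proof -
    have "\<not> inj_on g V" using x unfolding inj_on_def g_def by auto
    then have "card (g ` V) \<noteq> card V" using eq_card_imp_inj_on fin by blast
    then show ?thesis using card_image_le[OF fin(1), of g] by linarith
  qed
  have cE1: "card E1 \<le> card E" using fin by (auto simp: E1_def intro: card_mono)
  have cE2: "card E2 \<le> card E" using fin by (auto simp: E2_def intro: card_mono)
  have cut1: "\<forall>T. s \<in> T \<longrightarrow> t \<notin> T \<longrightarrow> k \<le> card (ecut E1 ends1 T)"
  proof (intro allI impI)
    fix T assume T: "s \<in> T" "t \<notin> T"
    have "ecut E1 ends1 T = ecut E ends (T \<inter> S)"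
      unfolding ecut_def E1_def ends1_def f_def using T S by auto
    then show "k \<le> card (ecut E1 ends1 T)" using cutk T S by auto
  qed
  have cut2: "\<forall>T. s \<in> T \<longrightarrow> t \<notin> T \<longrightarrow> k \<le> card (ecut E2 ends2 T)"
  proof (intro allI impI)
    fix T assume T: "s \<in> T" "t \<notin> T"
    have "ecut E2 ends2 T = ecut E ends (T \<union> S)"
      unfolding ecut_def E2_def ends2_def g_def using T S by auto
    then show "k \<le> card (ecut E2 ends2 T)" using cutk T S by auto
  qed
  have sV1: "s \<in> f ` V" "t \<in> f ` V" using st S by (auto simp: f_def image_iff intro!: bexI[of _ s] bexI[of _ t])
  have sV2: "s \<in> g ` V" "t \<in> g ` V" using st S by (auto simp: g_def image_iff intro!: bexI[of _ s] bexI[of _ t])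
  obtain P where P: "kpaths k (f ` V) E1 ends1 s t P" using IH[of "f ` V" E1 ends1] mg1 sV1 cut1 cV1 cE1 by force
  obtain Q where Q: "kpaths k (g ` V) E2 ends2 s t Q" using IH[of "g ` V" E2 ends2] mg2 sV2 cut2 cV2 cE2 by force
  have E1E: "E1 \<subseteq> E" and E2E: "E2 \<subseteq> E" by (auto simp: E1_def E2_def)
  define xsP where "xsP i = butlast (fst (P i))" for i
  define c where "c i = last (snd (P i))" for i
  define zsQ where "zsQ j = tl (fst (Q j))" for j
  define gsQ where "gsQ j = tl (snd (Q j))" for j
  define d where "d j = hd (snd (Q j))" for j
  have Pi: "snd (P i) = butlast (snd (P i)) @ [c i] \<and> xsP i \<noteq> [] \<and> walk E ends (xsP i) (butlast (snd (P i))) \<and>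
     distinct (xsP i) \<and> hd (xsP i) = s \<and> set (xsP i) \<subseteq> S \<inter> V \<and> c i \<in> E \<and> last (xsP i) \<in> S \<and>
     (\<exists>b. b \<notin> S \<and> (ends (c i) = (last (xsP i), b) \<or> ends (c i) = (b, last (xsP i)))) \<and>
     set (snd (P i)) \<subseteq> E1" if i: "i < k" for i
  proof -
    have p: "is_path (f ` V) E1 ends1 s t (fst (P i)) (snd (P i))" using P i by (auto simp: kpaths_def)
    obtain xs fs e b where h: "fst (P i) = xs @ [t]" "snd (P i) = fs @ [e]" "xs \<noteq> []" "walk E ends xs fs"
      "distinct xs" "hd xs = s" "set xs \<subseteq> S \<inter> V" "e \<in> E" "b \<notin> S" "last xs \<in> S"
      "ends e = (last xs, b) \<or> ends e = (b, last xs)"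
      using contract_left[OF p[unfolded ends1_def] st(3) S(1,2) f_def E1E refl] by blast
    have "set (snd (P i)) \<subseteq> E1" using p walk_edges[of E1 ends1 "fst (P i)" "snd (P i)"] by (auto simp: is_path_iff)
    then show ?thesis using h unfolding xsP_def c_def by auto
  qed
  have Qj: "fst (Q j) = s # zsQ j \<and> snd (Q j) = d j # gsQ j \<and> zsQ j \<noteq> [] \<and> walk E ends (zsQ j) (gsQ j) \<and>
     distinct (zsQ j) \<and> last (zsQ j) = t \<and> set (zsQ j) \<subseteq> V - S \<and> d j \<in> E \<and>
     (\<exists>w. w \<in> S \<and> (ends (d j) = (w, hd (zsQ j)) \<or> ends (d j) = (hd (zsQ j), w)))" if j: "j < k" for j
  proof -
    have p: "is_path (g ` V) E2 ends2 s t (fst (Q j)) (snd (Q j))" using Q j by (auto simp: kpaths_def)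
    obtain z zs dd gs w where h: "fst (Q j) = s # z # zs" "snd (Q j) = dd # gs" "walk E ends (z # zs) gs"
      "distinct (z # zs)" "last (z # zs) = t" "set (z # zs) \<subseteq> V - S" "dd \<in> E" "w \<in> S"
      "ends dd = (w, z) \<or> ends dd = (z, w)"
      using contract_right[OF p[unfolded ends2_def] st(3) S(1,2) g_def E2E refl] by blast
    then show ?thesis unfolding zsQ_def gsQ_def d_def by auto
  qed
  have ccut: "c i \<in> ecut E ends S" if "i < k" for i
    using Pi[OF that] unfolding ecut_def by auto
  have dcut: "d j \<in> ecut E ends S" if "j < k" for j
  proof -
    have "hd (zsQ j) \<in> set (zsQ j)" using Qj[OF that] by auto
    moreover have "set (zsQ j) \<subseteq> V - S" using Qj[OF that] by blast
    ultimately have "hd (zsQ j) \<notin> S" by blast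
    then show ?thesis using Qj[OF that] unfolding ecut_def by auto
  qed
  have cinP: "c i \<in> set (snd (P i))" if "i < k" for i
    using Pi[OF that] by (metis in_set_conv_decomp)
  have dinQ: "d j \<in> set (snd (Q j))" "set (gsQ j) \<subseteq> set (snd (Q j))" if "j < k" for j
    using Qj[OF that] by auto
  have Pdisj: "set (snd (P i)) \<inter> set (snd (P i')) = {}" if "i < k" "i' < k" "i \<noteq> i'" for i i'
    using P that by (auto simp: kpaths_def)
  have Qdisj: "set (snd (Q i)) \<inter> set (snd (Q i')) = {}" if "i < k" "i' < k" "i \<noteq> i'" for i i'
    using Q that by (auto simp: kpaths_def)
  have cinj: "inj_on c {..<k}"
  proof (rule inj_onI)
    fix i i' assume ii: "i \<in> {..<k}" "i' \<in> {..<k}" "c i = c i'"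
    show "i = i'"
    proof (rule ccontr)
      assume "i \<noteq> i'"
      then have "set (snd (P i)) \<inter> set (snd (P i')) = {}" using Pdisj ii by auto
      moreover have "c i \<in> set (snd (P i))" "c i' \<in> set (snd (P i'))" using cinP ii(1,2) by auto
      ultimately show False using ii(3) by auto
    qed
  qed
  have dinj: "inj_on d {..<k}"
  proof (rule inj_onI)
    fix i i' assume ii: "i \<in> {..<k}" "i' \<in> {..<k}" "d i = d i'"
    show "i = i'"
    proof (rule ccontr)
      assume "i \<noteq> i'"
      then have "set (snd (Q i)) \<inter> set (snd (Q i')) = {}" using Qdisj ii by auto
      moreover have "d i \<in> set (snd (Q i))" "d i' \<in> set (snd (Q i'))" using dinQ(1) ii(1,2) by auto
      ultimately show False using ii(3) by auto
    qed
  qed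
  have fincut: "finite (ecut E ends S)" using fin by (auto simp: ecut_def)
  have cimg: "c ` {..<k} = ecut E ends S"
    using card_subset_eq[OF fincut, of "c ` {..<k}"] ccut card_image[OF cinj] S(3) by auto
  have dimg: "d ` {..<k} = ecut E ends S"
    using card_subset_eq[OF fincut, of "d ` {..<k}"] dcut card_image[OF dinj] S(3) by auto
  define j where "j i = (SOME j. j < k \<and> d j = c i)" for i
  have jp: "j i < k \<and> d (j i) = c i" if "i < k" for i
  proof -
    have "c i \<in> d ` {..<k}" using dimg ccut[OF that] by auto
    then have "\<exists>j. j < k \<and> d j = c i" by auto
    then show ?thesis unfolding j_def by (rule someI_ex)
  qed
  define R where "R i = (xsP i @ zsQ (j i), snd (P i) @ gsQ (j i))" for i
  have Rpath: "is_path V E ends s t (fst (R i)) (snd (R i))" if i: "i < k" for i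
  proof -
    note pi = Pi[OF i] and qj = Qj[OF conjunct1[OF jp[OF i]]]
    obtain z zs where zz: "zsQ (j i) = z # zs" using qj by (cases "zsQ (j i)") auto
    obtain b where b: "b \<notin> S" "ends (c i) = (last (xsP i), b) \<or> ends (c i) = (b, last (xsP i))" using pi by blast
    obtain w where w: "w \<in> S" "ends (c i) = (w, z) \<or> ends (c i) = (z, w)" using qj zz jp[OF i] by auto
    have zS: "z \<notin> S" using qj zz by auto
    have lS: "last (xsP i) \<in> S" using pi by blast
    have ec: "ends (c i) = (last (xsP i), z) \<or> ends (c i) = (z, last (xsP i))"
      using b w zS lS by auto
    have "walk E ends (xsP i @ z # zs) (butlast (snd (P i)) @ c i # gsQ (j i))"
      using walk_glue[of E ends "xsP i" "butlast (snd (P i))" z zs "gsQ (j i)" "c i"] pi qj zz ec by auto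
    moreover have "butlast (snd (P i)) @ c i # gsQ (j i) = snd (P i) @ gsQ (j i)"
      using pi by (metis append.assoc append_Cons append_Nil)
    moreover have "distinct (xsP i @ zsQ (j i))" using pi qj by auto
    moreover have "set (xsP i @ zsQ (j i)) \<subseteq> V" using pi qj by auto
    moreover have "hd (xsP i @ zsQ (j i)) = s" using pi by auto
    moreover have "last (xsP i @ zsQ (j i)) = t" using qj by auto
    ultimately show ?thesis unfolding R_def is_path_iff using zz by auto
  qed
  have Rdisj: "set (snd (R i)) \<inter> set (snd (R i')) = {}" if ii: "i < k" "i' < k" "i \<noteq> i'" for i i'
  proof -
    have jj: "j i \<noteq> j i'" using jp[OF ii(1)] jp[OF ii(2)] cinj ii unfolding inj_on_def by auto
    have outS: "fst (ends e) \<notin> S \<and> snd (ends e) \<notin> S" if "e \<in> set (gsQ jj)" "jj < k" for e jj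
    proof -
      have "fst (ends e) \<in> set (zsQ jj) \<and> snd (ends e) \<in> set (zsQ jj)"
        using walk_ends_in[of E ends "zsQ jj" "gsQ jj" e] Qj[OF that(2)] that(1) by auto
      then show ?thesis using Qj[OF that(2)] by auto
    qed
    have inS: "fst (ends e) \<in> S \<or> snd (ends e) \<in> S" if "e \<in> set (snd (P ii))" "ii < k" for e ii
      using Pi[OF that(2)] that(1) unfolding E1_def by auto
    have a1: "set (snd (P i)) \<inter> set (snd (P i')) = {}" using Pdisj ii by auto
    have a2: "set (gsQ (j i)) \<inter> set (gsQ (j i')) = {}"
      using Qdisj[OF conjunct1[OF jp[OF ii(1)]] conjunct1[OF jp[OF ii(2)]] jj]
        dinQ(2)[OF conjunct1[OF jp[OF ii(1)]]] dinQ(2)[OF conjunct1[OF jp[OF ii(2)]]] by auto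
    have a3: "set (snd (P i)) \<inter> set (gsQ (j i')) = {}"
      using inS[OF _ ii(1)] outS[OF _ conjunct1[OF jp[OF ii(2)]]] by blast
    have a4: "set (gsQ (j i)) \<inter> set (snd (P i')) = {}"
      using inS[OF _ ii(2)] outS[OF _ conjunct1[OF jp[OF ii(1)]]] by blast
    show ?thesis unfolding R_def using a1 a2 a3 a4 by auto
  qed
  show ?thesis unfolding kpaths_def using Rpath Rdisj by blast
qed

lemma case_split:
  fixes V :: "'v set" and E :: "'e set"
  assumes mg: "is_multigraph V E ends" and st: "s \<in> V" "t \<in> V" "s \<noteq> t"
    and cutk: "\<forall>T. s \<in> T \<longrightarrow> t \<notin> T \<longrightarrow> k \<le> card (ecut E ends T)"
    and v: "v \<noteq> s" "v \<noteq> t" and ab: "a \<in> E" "b \<in> E"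
    and ea: "ends a = (s, v) \<or> ends a = (v, s)" and eb: "ends b = (v, t) \<or> ends b = (t, v)"
    and IH: "\<And>(V'::'v set) (E'::'e set) ends'. card V' + card E' < card V + card E \<Longrightarrow> is_multigraph V' E' ends' \<Longrightarrow>
       s \<in> V' \<Longrightarrow> t \<in> V' \<Longrightarrow> (\<forall>T. s \<in> T \<longrightarrow> t \<notin> T \<longrightarrow> k \<le> card (ecut E' ends' T)) \<Longrightarrow>
       \<exists>P. kpaths k V' E' ends' s t P"
  shows "\<exists>P. kpaths k V E ends s t P"
proof -
  define ends' where "ends' = ends(a := (s, t))"
  define E' where "E' = E - {b}"
  have fin: "finite V" "finite E" and endsV: "\<forall>e\<in>E. fst (ends e) \<in> V \<and> snd (ends e) \<in> V"
    using mg by (auto simp: is_multigraph_def)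
  have vV: "v \<in> V" using ea endsV ab by auto
  have anb: "a \<noteq> b" using ea eb v st(3) by auto
  have mg': "is_multigraph V E' ends'" using fin endsV st unfolding is_multigraph_def E'_def ends'_def by auto
  have cE: "card E' < card E" unfolding E'_def by (rule card_Diff1_less[OF fin(2) ab(2)])
  have cut': "\<forall>T. s \<in> T \<longrightarrow> t \<notin> T \<longrightarrow> k \<le> card (ecut E' ends' T)"
  proof (intro allI impI)
    fix T assume T: "s \<in> T" "t \<notin> T"
    define C where "C = ecut E ends T"
    define C' where "C' = ecut E' ends' T"
    have finC: "finite C" "finite C'" using fin unfolding C_def C'_def ecut_def E'_def by auto
    have aC': "a \<in> C'" unfolding C'_def ecut_def E'_def ends'_def using ab anb T by auto
    have sub: "C - {a, b} \<subseteq> C'" unfolding C_def C'_def ecut_def E'_def ends'_def by auto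
    have aC: "a \<in> C \<longleftrightarrow> v \<notin> T" unfolding C_def ecut_def using ea ab T by auto
    have bC: "b \<in> C \<longleftrightarrow> v \<in> T" unfolding C_def ecut_def using eb ab T by auto
    have "card C \<le> card C'"
    proof (cases "b \<in> C")
      case False
      then have "C \<subseteq> C'" using sub aC' by auto
      then show ?thesis using finC card_mono by blast
    next
      case True
      then have "a \<notin> C" using aC bC by auto
      then have "C - {b} \<subseteq> C' - {a}" using sub by auto
      then have "card (C - {b}) \<le> card (C' - {a})" using finC card_mono by (metis finite_Diff)
      moreover have "card C > 0" "card C' > 0" using True aC' finC card_gt_0_iff by blast+
      ultimately show ?thesis using True aC' finC by (simp add: card_Diff_singleton)
    qed
    then show "k \<le> card C'" using cutk T unfolding C_def by fastforce
  qed
  obtain P where P: "kpaths k V E' ends' s t P" using IH[OF _ mg' st(1,2) cut'] cE by force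
  define R where "R i = (if a \<in> set (snd (P i)) then ([s, v, t], [a, b]) else P i)" for i
  have Rp: "is_path V E ends s t (fst (R i)) (snd (R i))" if i: "i < k" for i
  proof (cases "a \<in> set (snd (P i))")
    case True
    then show ?thesis unfolding R_def is_path_iff using ab ea eb v st vV by auto
  next
    case False
    have p: "is_path V E' ends' s t (fst (P i)) (snd (P i))" using P i by (auto simp: kpaths_def)
    then have w: "walk E' ends' (fst (P i)) (snd (P i))" by (simp add: is_path_iff)
    have "\<forall>e\<in>set (snd (P i)). ends e = ends' e" using False unfolding ends'_def by auto
    then have "walk E' ends (fst (P i)) (snd (P i))" using walk_ends_cong[OF w] by auto
    then have "walk E ends (fst (P i)) (snd (P i))" using walk_mono walk_edges unfolding E'_def by blast
    then show ?thesis using p False unfolding R_def by (auto simp: is_path_iff)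
  qed
  have bP: "b \<notin> set (snd (P i))" if "i < k" for i
  proof -
    have "walk E' ends' (fst (P i)) (snd (P i))" using P that by (auto simp: kpaths_def is_path_iff)
    then show ?thesis using walk_edges unfolding E'_def by blast
  qed
  have Rs: "set (snd (R i)) \<subseteq> set (snd (P i)) \<union> {b}" "b \<in> set (snd (R i)) \<Longrightarrow> a \<in> set (snd (P i))" if "i < k" for i
    using bP[OF that] unfolding R_def by (auto split: if_splits)
  have Rd: "set (snd (R i)) \<inter> set (snd (R j)) = {}" if ij: "i < k" "j < k" "i \<noteq> j" for i j
  proof (rule ccontr)
    assume "set (snd (R i)) \<inter> set (snd (R j)) \<noteq> {}"
    then obtain e where e: "e \<in> set (snd (R i))" "e \<in> set (snd (R j))" by blast
    have dj: "set (snd (P i)) \<inter> set (snd (P j)) = {}" using P ij by (auto simp: kpaths_def)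
    show False
    proof (cases "e = b")
      case True
      then show ?thesis using Rs(2)[OF ij(1)] Rs(2)[OF ij(2)] e dj by auto
    next
      case False
      then show ?thesis using Rs(1)[OF ij(1)] Rs(1)[OF ij(2)] e dj by auto
    qed
  qed
  show ?thesis unfolding kpaths_def using Rp Rd by blast
qed

lemma case_direct:
  fixes V :: "'v set" and E :: "'e set"
  assumes mg: "is_multigraph V E ends" and st: "s \<in> V" "t \<in> V" "s \<noteq> t"
    and cutk: "\<forall>T. s \<in> T \<longrightarrow> t \<notin> T \<longrightarrow> k \<le> card (ecut E ends T)"
    and inc: "\<forall>e\<in>E. fst (ends e) \<in> {s, t} \<or> snd (ends e) \<in> {s, t}"
    and nomid: "\<not> (\<exists>v a b. v \<noteq> s \<and> v \<noteq> t \<and> a \<in> E \<and> b \<in> E \<and> (ends a = (s, v) \<or> ends a = (v, s)) \<and>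
                   (ends b = (v, t) \<or> ends b = (t, v)))"
  shows "\<exists>P. kpaths k V E ends s t P"
proof -
  have fin: "finite E" using mg by (auto simp: is_multigraph_def)
  define S where "S = insert s {v. v \<noteq> t \<and> (\<exists>e\<in>E. ends e = (s, v) \<or> ends e = (v, s))}"
  define ST where "ST = {e\<in>E. ends e = (s, t) \<or> ends e = (t, s)}"
  have sS: "s \<in> S" "t \<notin> S" unfolding S_def using st by auto
  have sub: "ecut E ends S \<subseteq> ST"
  proof
    fix e assume e: "e \<in> ecut E ends S"
    obtain p q where pq: "ends e = (p, q)" by (cases "ends e")
    have eE: "e \<in> E" and pqS: "(p \<in> S) \<noteq> (q \<in> S)" using e pq unfolding ecut_def by auto
    have "p \<in> {s, t} \<or> q \<in> {s, t}" using inc eE pq by fastforce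
    moreover
    have memS: "x \<in> S" if "x \<noteq> t" "\<exists>e\<in>E. ends e = (s, x) \<or> ends e = (x, s)" for x
      using that unfolding S_def by auto
    have memS2: "x = s \<or> (x \<noteq> t \<and> (\<exists>e\<in>E. ends e = (s, x) \<or> ends e = (x, s)))" if "x \<in> S" for x
      using that unfolding S_def by auto
    have "ends e = (s, t) \<or> ends e = (t, s)"
    proof -
      consider "p = s" | "q = s" | "p = t" "p \<noteq> s" "q \<noteq> s" | "q = t" "p \<noteq> s" "q \<noteq> s" using calculation by auto
      then show ?thesis
      proof cases
        case 1
        then have "q \<notin> S" using pqS sS by auto
        then have "q = t" using memS[of q] eE pq 1 by auto
        then show ?thesis using pq 1 by auto
      next
        case 2
        then have "p \<notin> S" using pqS sS by auto
        then have "p = t" using memS[of p] eE pq 2 by auto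
        then show ?thesis using pq 2 by auto
      next
        case 3
        then have "q \<in> S" using pqS sS by auto
        then have "q \<noteq> t \<and> (\<exists>e\<in>E. ends e = (s, q) \<or> ends e = (q, s))" using memS2 3 by blast
        then show ?thesis using nomid eE pq 3 by blast
      next
        case 4
        then have "p \<in> S" using pqS sS by auto
        then have "p \<noteq> t \<and> (\<exists>e\<in>E. ends e = (s, p) \<or> ends e = (p, s))" using memS2 4 by blast
        then show ?thesis using nomid eE pq 4 by blast
      qed
    qed
    then show "e \<in> ST" unfolding ST_def using eE by auto
  qed
  have finST: "finite ST" using fin unfolding ST_def by auto
  have kST: "k \<le> card ST" using cutk sS card_mono[OF finST sub] by fastforce
  obtain xs where xs: "set xs = ST" "distinct xs" using finite_distinct_list[OF finST] by blast
  have lxs: "length xs = card ST" using xs distinct_card by fastforce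
  define R where "R i = ([s, t], [xs ! i])" for i
  have Rp: "is_path V E ends s t (fst (R i)) (snd (R i))" if i: "i < k" for i
  proof -
    have "xs ! i \<in> ST" using xs i kST lxs by auto
    then show ?thesis unfolding R_def is_path_iff ST_def using st by auto
  qed
  have Rd: "set (snd (R i)) \<inter> set (snd (R j)) = {}" if ij: "i < k" "j < k" "i \<noteq> j" for i j
    using xs(2) ij kST lxs unfolding R_def by (auto simp: nth_eq_iff_index_eq)
  show ?thesis unfolding kpaths_def using Rp Rd by blast
qed

lemma menger:
  fixes V :: "'v set" and E :: "'e set"
  shows "is_multigraph V E ends \<Longrightarrow> s \<in> V \<Longrightarrow> t \<in> V \<Longrightarrow> s \<noteq> t \<Longrightarrow>
    (\<forall>T. s \<in> T \<longrightarrow> t \<notin> T \<longrightarrow> k \<le> card (ecut E ends T)) \<Longrightarrow> \<exists>P. kpaths k V E ends s t P"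
proof (induction "card V + card E" arbitrary: V E ends rule: less_induct)
  case less
  have IH: "\<And>(V'::'v set) (E'::'e set) ends'. card V' + card E' < card V + card E \<Longrightarrow> is_multigraph V' E' ends' \<Longrightarrow>
       s \<in> V' \<Longrightarrow> t \<in> V' \<Longrightarrow> (\<forall>T. s \<in> T \<longrightarrow> t \<notin> T \<longrightarrow> k \<le> card (ecut E' ends' T)) \<Longrightarrow>
       \<exists>P. kpaths k V' E' ends' s t P"
    using less.hyps less.prems(2,3,4) by blast
  have mg: "is_multigraph V E ends" and st: "s \<in> V" "t \<in> V" "s \<noteq> t"
    and cutk: "\<forall>T. s \<in> T \<longrightarrow> t \<notin> T \<longrightarrow> k \<le> card (ecut E ends T)" using less.prems by auto
  have fin: "finite V" "finite E" and endsV: "\<forall>e\<in>E. fst (ends e) \<in> V \<and> snd (ends e) \<in> V"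
    using mg by (auto simp: is_multigraph_def)
  show ?case
  proof (cases "\<exists>e\<in>E. \<forall>T. s \<in> T \<longrightarrow> t \<notin> T \<longrightarrow> k \<le> card (ecut (E - {e}) ends T)")
    case True
    then obtain e where e: "e \<in> E" "\<forall>T. s \<in> T \<longrightarrow> t \<notin> T \<longrightarrow> k \<le> card (ecut (E - {e}) ends T)" by blast
    have mg': "is_multigraph V (E - {e}) ends" using mg by (auto simp: is_multigraph_def)
    have "card (E - {e}) < card E" by (rule card_Diff1_less[OF fin(2) e(1)])
    then obtain P where P: "kpaths k V (E - {e}) ends s t P" using IH[OF _ mg' st(1,2) e(2)] by force
    have "is_path V E ends s t (fst (P i)) (snd (P i))" if "i < k" for i
    proof -
      have p: "is_path V (E - {e}) ends s t (fst (P i)) (snd (P i))" using P that by (auto simp: kpaths_def)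
      then have "walk E ends (fst (P i)) (snd (P i))"
        using walk_mono walk_edges unfolding is_path_iff by blast
      then show ?thesis using p by (auto simp: is_path_iff)
    qed
    then show ?thesis using P unfolding kpaths_def by blast
  next
    case False
    then have noe: "\<forall>e\<in>E. \<exists>T. s \<in> T \<and> t \<notin> T \<and> card (ecut (E - {e}) ends T) < k" by (auto simp: not_le)
    show ?thesis
    proof (cases "\<exists>S x1 x2 y1 y2. s \<in> S \<and> t \<notin> S \<and> card (ecut E ends S) = k \<and> y1 \<in> V - S \<and> y2 \<in> V - S \<and>
        y1 \<noteq> y2 \<and> x1 \<in> V \<inter> S \<and> x2 \<in> V \<inter> S \<and> x1 \<noteq> x2")
      case True
      then obtain S x1 x2 y1 y2 where h: "s \<in> S" "t \<notin> S" "card (ecut E ends S) = k" "y1 \<in> V - S" "y2 \<in> V - S"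
        "y1 \<noteq> y2" "x1 \<in> V \<inter> S" "x2 \<in> V \<inter> S" "x1 \<noteq> x2" by blast
      show ?thesis by (rule case_contract[OF mg st cutk h IH])
    next
      case False
      have inc: "\<forall>e\<in>E. fst (ends e) \<in> {s, t} \<or> snd (ends e) \<in> {s, t}"
      proof
        fix e assume e: "e \<in> E"
        obtain T where T: "s \<in> T" "t \<notin> T" "card (ecut (E - {e}) ends T) < k" using noe e by blast
        have eq: "ecut (E - {e}) ends T = ecut E ends T - {e}" unfolding ecut_def by auto
        have kT: "k \<le> card (ecut E ends T)" using cutk T by auto
        have finT: "finite (ecut E ends T)" using fin unfolding ecut_def by auto
        have eT: "e \<in> ecut E ends T"
        proof (rule ccontr)
          assume "e \<notin> ecut E ends T"
          then have "ecut (E - {e}) ends T = ecut E ends T" using eq by auto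
          then show False using kT T by auto
        qed
        then have "card (ecut E ends T) = card (ecut (E - {e}) ends T) + 1"
        proof -
          have "card (ecut E ends T) > 0" using eT finT card_gt_0_iff by blast
          then show ?thesis using eq finT eT by (simp add: card_Diff_singleton)
        qed
        then have cT: "card (ecut E ends T) = k" using kT T by auto
        have triv: "(\<forall>y1 y2. y1 \<in> V - T \<longrightarrow> y2 \<in> V - T \<longrightarrow> y1 = y2) \<or> (\<forall>x1 x2. x1 \<in> V \<inter> T \<longrightarrow> x2 \<in> V \<inter> T \<longrightarrow> x1 = x2)"
          using False T(1,2) cT by blast
        obtain p q where pq: "ends e = (p, q)" by (cases "ends e")
        have pqV: "p \<in> V" "q \<in> V" using endsV e pq by auto
        have pqT: "(p \<in> T) \<noteq> (q \<in> T)" using eT pq unfolding ecut_def by auto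
        have "p \<in> {s, t} \<or> q \<in> {s, t}"
          using triv
        proof
          assume "\<forall>y1 y2. y1 \<in> V - T \<longrightarrow> y2 \<in> V - T \<longrightarrow> y1 = y2"
          then have "\<forall>y \<in> V - T. y = t" using st T by auto
          then show ?thesis using pqT pqV by auto
        next
          assume "\<forall>x1 x2. x1 \<in> V \<inter> T \<longrightarrow> x2 \<in> V \<inter> T \<longrightarrow> x1 = x2"
          then have "\<forall>y \<in> V \<inter> T. y = s" using st T by auto
          then show ?thesis using pqT pqV by auto
        qed
        then show "fst (ends e) \<in> {s, t} \<or> snd (ends e) \<in> {s, t}" using pq by auto
      qed
      show ?thesis
      proof (cases "\<exists>v a b. v \<noteq> s \<and> v \<noteq> t \<and> a \<in> E \<and> b \<in> E \<and> (ends a = (s, v) \<or> ends a = (v, s)) \<and>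
                   (ends b = (v, t) \<or> ends b = (t, v))")
        case True
        then obtain v a b where h: "v \<noteq> s" "v \<noteq> t" "a \<in> E" "b \<in> E" "ends a = (s, v) \<or> ends a = (v, s)"
          "ends b = (v, t) \<or> ends b = (t, v)" by blast
        show ?thesis by (rule case_split[OF mg st cutk h IH])
      next
        case False
        show ?thesis by (rule case_direct[OF mg st cutk inc False])
      qed
    qed
  qed
qed

lemma kequiv_transfer:
  assumes "k_equiv k V G ends b b'" "\<And>vs es. walk G ends vs es \<Longrightarrow> hd vs = b \<Longrightarrow> set es \<subseteq> H"
  shows "k_equiv k V H ends b b'"
proof (cases "b = b'")
  case True then show ?thesis by (simp add: k_equiv_def)
next
  case False
  then obtain P where P: "\<forall>i<k. is_path V G ends b b' (fst (P i)) (snd (P i))"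
    "\<forall>i<k. \<forall>j<k. i \<noteq> j \<longrightarrow> set (snd (P i)) \<inter> set (snd (P j)) = {}"
    using assms(1) unfolding k_equiv_def by blast
  have "is_path V H ends b b' (fst (P i)) (snd (P i))" if "i < k" for i
  proof -
    have p: "is_path V G ends b b' (fst (P i)) (snd (P i))" using P that by blast
    then have "walk H ends (fst (P i)) (snd (P i))" using assms(2) walk_mono unfolding is_path_iff by blast
    then show ?thesis using p unfolding is_path_iff by blast
  qed
  then show ?thesis using P(2) unfolding k_equiv_def by blast
qed

lemma side:
  assumes "walk G ends vs es" "hd vs \<in> Z" "G \<subseteq> F - ecut F ends Z"
  shows "set vs \<subseteq> Z \<and> (\<forall>e\<in>set es. fst (ends e) \<in> Z \<and> snd (ends e) \<in> Z)"
proof -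
  have "\<forall>e\<in>set es. (fst (ends e) \<in> Z) = (snd (ends e) \<in> Z)"
    using walk_edges[OF assms(1)] assms(3) unfolding ecut_def by blast
  then have "set vs \<subseteq> Z" using walk_stay[OF assms(1,2)] by blast
  then show ?thesis using walk_ends_in[OF assms(1)] by blast
qed

lemma sep_side:
  assumes Xc: "Xc = ecut F ends Z" and Ysub: "Y \<subseteq> Xc \<union> (Xz \<inter> {e. fst (ends e) \<in> Z \<and> snd (ends e) \<in> Z}) \<union> Xo"
    and Ysup: "Xc \<union> (Xz \<inter> {e. fst (ends e) \<in> Z \<and> snd (ends e) \<in> Z}) \<subseteq> Y"
    and Xo: "\<forall>e\<in>Xo. \<not> (fst (ends e) \<in> Z \<and> snd (ends e) \<in> Z)"
    and sep: "k_perfectly_separates k V (F - Xc) ends Xz Az"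
    and bb: "b \<in> Az" "b' \<in> Az" "b \<in> Z"
    and sc: "same_component V (F - Y) ends b b'"
  shows "k_equiv k V (F - Y) ends b b'"
proof -
  obtain vs es where p: "is_path V (F - Y) ends b b' vs es" using sc unfolding same_component_def by blast
  then have w: "walk (F - Y) ends vs es" "hd vs = b" by (auto simp: is_path_iff)
  have "F - Y \<subseteq> F - ecut F ends Z" using Ysup Xc by auto
  then have "\<forall>e\<in>set es. fst (ends e) \<in> Z \<and> snd (ends e) \<in> Z" using side[OF w(1) _] w(2) bb(3) by blast
  then have "set es \<subseteq> F - Xc - Xz" using walk_edges[OF w(1)] Ysup by blast
  then have "is_path V (F - Xc - Xz) ends b b' vs es" using p walk_mono unfolding is_path_iff by blast
  then have "same_component V (F - Xc - Xz) ends b b'" unfolding same_component_def by blast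
  then have ke: "k_equiv k V (F - Xc - Xz) ends b b'" using sep bb unfolding k_perfectly_separates_def by blast
  show ?thesis
  proof (rule kequiv_transfer[OF ke])
    fix vs es assume w2: "walk (F - Xc - Xz) ends vs es" "hd vs = b"
    have "F - Xc - Xz \<subseteq> F - ecut F ends Z" using Xc by auto
    then have "\<forall>e\<in>set es. fst (ends e) \<in> Z \<and> snd (ends e) \<in> Z" using side[OF w2(1) _] w2(2) bb(3) by blast
    then show "set es \<subseteq> F - Y" using walk_edges[OF w2(1)] Ysub Xo by blast
  qed
qed

lemma sep_gen:
  fixes V :: "'v set" and E :: "'e set"
  assumes mg: "is_multigraph V E ends"
  shows "A \<subseteq> V \<Longrightarrow> A \<noteq> {} \<Longrightarrow> F \<subseteq> E \<Longrightarrow>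
    \<exists>X \<subseteq> F. card X \<le> (card A - 1) * (k - 1) \<and> k_perfectly_separates k V F ends X A"
proof (induction "card A" arbitrary: A F rule: less_induct)
  case less
  have fin: "finite V" "finite E" and endsV: "\<forall>e\<in>E. fst (ends e) \<in> V \<and> snd (ends e) \<in> V"
    using mg by (auto simp: is_multigraph_def)
  have finA: "finite A" using less.prems(1) fin rev_finite_subset by blast
  have finF: "finite F" using less.prems(3) fin rev_finite_subset by blast
  have mgF: "is_multigraph V F ends" using mg less.prems(3) by (auto simp: is_multigraph_def finF)
  show ?case
  proof (cases "\<forall>a\<in>A. \<forall>a'\<in>A. k_equiv k V F ends a a'")
    case True
    then have "k_perfectly_separates k V F ends {} A" unfolding k_perfectly_separates_def by simp
    then show ?thesis by (intro exI[of _ "{}"]) simp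
  next
    case False
    then obtain a a' where aa: "a \<in> A" "a' \<in> A" "\<not> k_equiv k V F ends a a'" by blast
    then have ne: "a \<noteq> a'" by (auto simp: k_equiv_def)
    have "\<not> (\<forall>T. a \<in> T \<longrightarrow> a' \<notin> T \<longrightarrow> k \<le> card (ecut F ends T))"
    proof
      assume "\<forall>T. a \<in> T \<longrightarrow> a' \<notin> T \<longrightarrow> k \<le> card (ecut F ends T)"
      then obtain P where "kpaths k V F ends a a' P"
        using menger[OF mgF _ _ ne] aa less.prems(1) by blast
      then have "k_equiv k V F ends a a'" unfolding kpaths_def k_equiv_def by blast
      then show False using aa by blast
    qed
    then obtain S where S: "a \<in> S" "a' \<notin> S" "card (ecut F ends S) < k" by (auto simp: not_le)
    define X0 where "X0 = ecut F ends S"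
    define A1 where "A1 = A \<inter> S"
    define A2 where "A2 = A - S"
    define In where "In = {e. fst (ends e) \<in> S \<and> snd (ends e) \<in> S}"
    define Out where "Out = {e. fst (ends e) \<in> - S \<and> snd (ends e) \<in> - S}"
    have A1: "A1 \<subseteq> V" "A1 \<noteq> {}" "card A1 < card A"
      unfolding A1_def using less.prems(1) aa S finA by (auto intro!: psubset_card_mono)
    have A2: "A2 \<subseteq> V" "A2 \<noteq> {}" "card A2 < card A"
      unfolding A2_def using less.prems(1) aa S finA by (auto intro!: psubset_card_mono)
    have FX: "F - X0 \<subseteq> E" using less.prems(3) by auto
    obtain X1 where X1: "X1 \<subseteq> F - X0" "card X1 \<le> (card A1 - 1) * (k - 1)"
      "k_perfectly_separates k V (F - X0) ends X1 A1"
      using less.hyps[OF A1(3) A1(1,2) FX] by blast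
    obtain X2 where X2: "X2 \<subseteq> F - X0" "card X2 \<le> (card A2 - 1) * (k - 1)"
      "k_perfectly_separates k V (F - X0) ends X2 A2"
      using less.hyps[OF A2(3) A2(1,2) FX] by blast
    define Y where "Y = X0 \<union> (X1 \<inter> In) \<union> (X2 \<inter> Out)"
    have YF: "Y \<subseteq> F" unfolding Y_def X0_def ecut_def using X1(1) X2(1) by auto
    have cA: "card A = card A1 + card A2" unfolding A1_def A2_def using finA
      by (rule card_Int_Diff)
    have cY: "card Y \<le> card X0 + card X1 + card X2"
    proof -
      have f1: "finite X1" "finite X2" "finite X0" using X1(1) X2(1) finF unfolding X0_def ecut_def
        by (auto intro: rev_finite_subset)
      have "card Y \<le> card X0 + card (X1 \<inter> In) + card (X2 \<inter> Out)"
        unfolding Y_def using card_Un_le[of "X0 \<union> X1 \<inter> In" "X2 \<inter> Out"] card_Un_le[of X0 "X1 \<inter> In"] by linarith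
      also have "\<dots> \<le> card X0 + card X1 + card X2"
        using card_mono[OF f1(1), of "X1 \<inter> In"] card_mono[OF f1(2), of "X2 \<inter> Out"] by auto
      finally show ?thesis .
    qed
    have "card Y \<le> (card A - 1) * (k - 1)"
    proof -
      obtain d1 where d1: "card A1 = Suc d1" using A1 finA
        by (metis A1_def card_gt_0_iff finite_Int gr0_implies_Suc)
      obtain d2 where d2: "card A2 = Suc d2" using A2 finA
        by (metis A2_def card_gt_0_iff finite_Diff gr0_implies_Suc)
      define m where "m = k - 1"
      have h0: "card X0 \<le> m" using S unfolding X0_def m_def by auto
      have h1: "card X1 \<le> d1 * m" using X1(2) d1 unfolding m_def by simp
      have h2: "card X2 \<le> d2 * m" using X2(2) d2 unfolding m_def by simp
      have e: "(card A - 1) * m = m + d1 * m + d2 * m" using cA d1 d2 by (simp add: algebra_simps)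
      show ?thesis using cY h0 h1 h2 e unfolding m_def[symmetric] by linarith
    qed
    moreover have "k_perfectly_separates k V F ends Y A"
      unfolding k_perfectly_separates_def
    proof (intro ballI impI)
      fix b b' assume bb: "b \<in> A" "b' \<in> A" and nk: "\<not> k_equiv k V (F - Y) ends b b'"
      show "\<not> same_component V (F - Y) ends b b'"
      proof
        assume sc: "same_component V (F - Y) ends b b'"
        obtain vs es where p: "is_path V (F - Y) ends b b' vs es" using sc unfolding same_component_def by blast
        then have w: "walk (F - Y) ends vs es" "hd vs = b" "last vs = b'" by (auto simp: is_path_iff)
        have vsne: "vs \<noteq> []" using walk_nonempty[OF w(1)] .
        have ecS: "ecut F ends (- S) = ecut F ends S" unfolding ecut_def by auto
        show False
        proof (cases "b \<in> S")
          case True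
          have "F - Y \<subseteq> F - ecut F ends S" unfolding Y_def X0_def by auto
          then have "set vs \<subseteq> S" using side[OF w(1)] w(2) True by blast
          then have b'S: "b' \<in> S" using w(3) vsne by auto
          have "k_equiv k V (F - Y) ends b b'"
          proof (rule sep_side[where Z = S and Xc = X0 and Xz = X1 and Xo = "X2 \<inter> Out" and Az = A1])
            show "X0 = ecut F ends S" by (simp add: X0_def)
            show "Y \<subseteq> X0 \<union> (X1 \<inter> {e. fst (ends e) \<in> S \<and> snd (ends e) \<in> S}) \<union> X2 \<inter> Out"
              unfolding Y_def In_def by auto
            show "X0 \<union> (X1 \<inter> {e. fst (ends e) \<in> S \<and> snd (ends e) \<in> S}) \<subseteq> Y"
              unfolding Y_def In_def by auto
            show "\<forall>e\<in>X2 \<inter> Out. \<not> (fst (ends e) \<in> S \<and> snd (ends e) \<in> S)" unfolding Out_def by auto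
                      show "k_perfectly_separates k V (F - X0) ends X1 A1" by (rule X1(3))
            show "b \<in> A1" using bb(1) True by (simp add: A1_def)
            show "b' \<in> A1" using bb(2) b'S by (simp add: A1_def)
            show "b \<in> S" by (rule True)
            show "same_component V (F - Y) ends b b'" by (rule sc)
          qed
          then show False using nk by blast
        next
          case False
          have "F - Y \<subseteq> F - ecut F ends (- S)" unfolding Y_def X0_def ecS by auto
          then have "set vs \<subseteq> - S" using side[OF w(1)] w(2) False by blast
          moreover have "last vs \<in> set vs" using vsne by simp
          ultimately have b'S: "b' \<notin> S" using w(3) by auto
          have "k_equiv k V (F - Y) ends b b'"
          proof (rule sep_side[where Z = "- S" and Xc = X0 and Xz = X2 and Xo = "X1 \<inter> In" and Az = A2])
            show "X0 = ecut F ends (- S)" by (simp add: X0_def ecS)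
            show "Y \<subseteq> X0 \<union> (X2 \<inter> {e. fst (ends e) \<in> - S \<and> snd (ends e) \<in> - S}) \<union> X1 \<inter> In"
              unfolding Y_def Out_def by auto
            show "X0 \<union> (X2 \<inter> {e. fst (ends e) \<in> - S \<and> snd (ends e) \<in> - S}) \<subseteq> Y"
              unfolding Y_def Out_def by auto
            show "\<forall>e\<in>X1 \<inter> In. \<not> (fst (ends e) \<in> - S \<and> snd (ends e) \<in> - S)" unfolding In_def by auto
                      show "k_perfectly_separates k V (F - X0) ends X2 A2" by (rule X2(3))
            show "b \<in> A2" using bb(1) False by (simp add: A2_def)
            show "b' \<in> A2" using bb(2) b'S by (simp add: A2_def)
            show "b \<in> - S" using False by simp
            show "same_component V (F - Y) ends b b'" by (rule sc)
          qed
          then show False using nk by blast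
        qed
      qed
    qed
    ultimately show ?thesis using YF by blast
  qed
qed

theorem lemma11:
  fixes V :: "'v set" and E :: "'e set" and ends :: "'e \<Rightarrow> 'v \<times> 'v"
    and A :: "'v set" and k :: nat
  assumes "k \<ge> 1"
    and "is_multigraph V E ends"
    and "A \<subseteq> V" and "A \<noteq> {}"
  shows "\<exists>X \<subseteq> E. card X \<le> (card A - 1) * (k - 1) \<and> k_perfectly_separates k V E ends X A"
  by (rule sep_gen[OF assms(2) assms(3,4) subset_refl])

end
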